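(* Let $\mathbf x_1,\ldots,\mathbf x_n\in\mathbb{R}^d\setminus\{\mathbf 0\}$, with $x_{ij}$ the $j$-th coordinate of $\mathbf x_i$, and let $\pi(\beta)\propto\prod_{i=1}^n\frac{1}{1+\exp(\mathbf x_i^T\beta)}$ be the (assumed proper) logit posterior under a flat prior. For $j=1,\ldots,d$ let $$z_j(\beta)=\frac12\sum_{i=1}^n x_{ij}\frac{\exp(\mathbf x_i^T\beta)}{1+\exp(\mathbf x_i^T\beta)}.$$ Then for every $\delta>0$ and every $j$, $\mathbb{E}_\pi[|z_j|^{2+\delta}]<\infty$.
   Context: The $z_j$ are the control variates $-\frac12\partial_{\beta_j}\ln\pi$ of the zero-variance method with linear trial polynomial, for a logit model in which all responses are $0$. *)

theory Defs
  imports "HOL-Analysis.Analysis"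
begin

text \<open>Unnormalised logit posterior (all responses 0, flat prior) on R^d,
  covariates x 0, ..., x (n-1).\<close>
definition logit_unnorm :: "(nat \<Rightarrow> real ^ 'd) \<Rightarrow> nat \<Rightarrow> real ^ 'd \<Rightarrow> real" where
  "logit_unnorm x n \<beta> = (\<Prod>i<n. 1 / (1 + exp (x i \<bullet> \<beta>)))"

definition logit_norm :: "(nat \<Rightarrow> real ^ 'd) \<Rightarrow> nat \<Rightarrow> ennreal" where
  "logit_norm x n = (\<integral>\<^sup>+ \<beta>. ennreal (logit_unnorm x n \<beta>) \<partial>lborel)"

text \<open>Posterior measure pi (a probability measure when the posterior is proper).\<close>
definition logit_post :: "(nat \<Rightarrow> real ^ 'd) \<Rightarrow> nat \<Rightarrow> (real ^ 'd) measure" where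
  "logit_post x n = density lborel
     (\<lambda>\<beta>. ennreal (logit_unnorm x n \<beta>) / logit_norm x n)"

definition zcv :: "(nat \<Rightarrow> real ^ 'd) \<Rightarrow> nat \<Rightarrow> 'd \<Rightarrow> real ^ 'd \<Rightarrow> real" where
  "zcv x n j \<beta> = 1/2 * (\<Sum>i<n. (x i $ j) * (exp (x i \<bullet> \<beta>) / (1 + exp (x i \<bullet> \<beta>))))"

end

theory Submission
  imports Defs
begin

lemma meas_g: "(\<lambda>\<beta>. ennreal (logit_unnorm x n \<beta>) / logit_norm x n) \<in> borel_measurable lborel"
proof -
  have "continuous_on UNIV (logit_unnorm x n)"
    unfolding logit_unnorm_def
    by (intro continuous_intros) (auto, smt (verit) exp_gt_zero)
  hence "logit_unnorm x n \<in> borel_measurable borel"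
    using borel_measurable_continuous_onI by blast
  thus ?thesis by measurable
qed

lemma zbound: "\<bar>zcv x n j \<beta>\<bar> \<le> 1/2 * (\<Sum>i<n. \<bar>x i $ j\<bar>)"
proof -
  have "\<bar>\<Sum>i<n. (x i $ j) * (exp (x i \<bullet> \<beta>) / (1 + exp (x i \<bullet> \<beta>)))\<bar>
      \<le> (\<Sum>i<n. \<bar>(x i $ j) * (exp (x i \<bullet> \<beta>) / (1 + exp (x i \<bullet> \<beta>)))\<bar>)"
    by (rule sum_abs)
  also have "\<dots> \<le> (\<Sum>i<n. \<bar>x i $ j\<bar>)"
  proof (rule sum_mono)
    fix i
    have "0 \<le> exp (x i \<bullet> \<beta>) / (1 + exp (x i \<bullet> \<beta>))" by (simp add: add_pos_pos less_imp_le)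
    moreover have "exp (x i \<bullet> \<beta>) / (1 + exp (x i \<bullet> \<beta>)) \<le> 1"
      by (simp add: divide_le_eq_1 add_pos_pos)
    ultimately show "\<bar>(x i $ j) * (exp (x i \<bullet> \<beta>) / (1 + exp (x i \<bullet> \<beta>)))\<bar> \<le> \<bar>x i $ j\<bar>"
      unfolding abs_mult by (metis abs_ge_zero abs_of_nonneg mult_left_le)
  qed
  finally show ?thesis unfolding zcv_def by (simp add: abs_mult)
qed

theorem mainTheorem8:
  fixes x :: "nat \<Rightarrow> real ^ 'd" and n :: nat and \<delta> :: real and j :: 'd
  assumes nonzero: "\<forall>i<n. x i \<noteq> 0"
    and proper: "logit_norm x n < \<infinity>"
    and delta: "\<delta> > 0"
  shows "(\<integral>\<^sup>+ \<beta>. ennreal (\<bar>zcv x n j \<beta>\<bar> powr (2 + \<delta>)) \<partial>logit_post x n) < \<infinity>"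
proof -
  define B where "B = 1/2 * (\<Sum>i<n. \<bar>x i $ j\<bar>)"
  define N where "N = logit_norm x n"
  have "(\<integral>\<^sup>+ \<beta>. ennreal (\<bar>zcv x n j \<beta>\<bar> powr (2 + \<delta>)) \<partial>logit_post x n)
      \<le> (\<integral>\<^sup>+ \<beta>. ennreal (B powr (2 + \<delta>)) \<partial>logit_post x n)"
    apply (rule nn_integral_mono)
    apply (rule ennreal_leI)
    apply (rule powr_mono2)
    using delta zbound[of x n j] by (auto simp: B_def)
  also have "\<dots> = ennreal (B powr (2 + \<delta>)) * emeasure (logit_post x n) (space (logit_post x n))"
    by simp
  also have "emeasure (logit_post x n) (space (logit_post x n))
      = (\<integral>\<^sup>+ \<beta>. ennreal (logit_unnorm x n \<beta>) / N \<partial>lborel)"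
    unfolding logit_post_def N_def
    using emeasure_density[OF meas_g, of UNIV x n] by simp
  also have "\<dots> = (\<integral>\<^sup>+ \<beta>. ennreal (logit_unnorm x n \<beta>) * inverse N \<partial>lborel)"
    by (simp add: divide_ennreal_def)
  also have "\<dots> = N * inverse N"
    unfolding N_def logit_norm_def
  proof (rule nn_integral_multc)
    have "continuous_on UNIV (logit_unnorm x n)"
      unfolding logit_unnorm_def
      by (intro continuous_intros) (auto, smt (verit) exp_gt_zero)
    hence "logit_unnorm x n \<in> borel_measurable borel"
      using borel_measurable_continuous_onI by blast
    thus "(\<lambda>\<beta>. ennreal (logit_unnorm x n \<beta>)) \<in> borel_measurable lborel" by measurable
  qed
  also have "N * inverse N \<le> 1"
  proof (cases "N = 0")
    case True thus ?thesis by simp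
  next
    case False
    hence "N / N = 1" using proper N_def by (simp add: ennreal_divide_self)
    thus ?thesis by (simp add: divide_ennreal_def)
  qed
  finally have "(\<integral>\<^sup>+ \<beta>. ennreal (\<bar>zcv x n j \<beta>\<bar> powr (2 + \<delta>)) \<partial>logit_post x n) \<le> ennreal (B powr (2 + \<delta>)) * 1"
    by (simp add: mult_left_mono)
  thus ?thesis by (simp add: le_less_trans)
qed

end
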